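(* Let $n>2$ be an integer, $a,c\in\mathbb{R}$ and $b\in\mathbb{R}$ with $b\neq0$. Let $M=m_n(a,b,c)$ be the $(n+1)\times(n+1)$ real symmetric matrix with rows and columns indexed $0,1,\dots,n$, whose $(0,0)$-entry is $-nc$, whose $(0,j)$- and $(j,0)$-entries equal $b$ for $j=1,\dots,n$, and whose lower-right $n\times n$ block (indices $1,\dots,n$) is the circulant matrix $\mathrm{circ}(c,a,0,\dots,0,a)$, i.e. its $(j,j)$-entry is $c$, its $(j,j')$-entry is $a$ when $j'\equiv j\pm1 \pmod n$, and all other entries are $0$. Put $\varphi=2\pi/n$, $\omega=e^{\mathrm{i}\varphi}$, \[\Delta=\bigl(2a+(n+1)c\bigr)^2+4nb^2,\qquad \beta_\pm=-\frac{2a+(n+1)c\mp\sqrt{\Delta}}{2b},\] \[\lambda_\pm=b\beta_\pm+2a+c=\tfrac12\bigl(2a-(n-1)c\pm\sqrt\Delta\bigr),\qquad \lambda_k=c+2a\cos(k\varphi)\ (k=1,\dots,n-1).\] Let $\bm w_\pm=[\beta_\pm,1,1,\dots,1]^{\mathsf T}\in\mathbb{R}^{n+1}$ and $\bm w_k=[0,1,\omega^k,\omega^{2k},\dots,\omega^{(n-1)k}]^{\mathsf T}\in\mathbb{C}^{n+1}$ for $k=1,\dots,n-1$. Then $(\lambda_-,\bm w_-)$, $(\lambda_+,\bm w_+)$ and $(\lambda_k,\bm w_k)$, $k=1,\dots,n-1$, are the eigenpairs of $M$: $M\bm w_\pm=\lambda_\pm\bm w_\pm$, $M\bm w_k=\lambda_k\bm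 w_k$, and the $n+1$ vectors $\bm w_-,\bm w_+,\bm w_1,\dots,\bm w_{n-1}$ are linearly independent. *)

theory Defs
  imports "Jordan_Normal_Form.VS_Connect"
begin

definition m_mat :: "nat \<Rightarrow> real \<Rightarrow> real \<Rightarrow> real \<Rightarrow> real mat" where
  "m_mat n a b c = mat (n+1) (n+1) (\<lambda>(i,j).
     if i = 0 \<and> j = 0 then - (real n * c)
     else if i = 0 \<or> j = 0 then b
     else if i = j then c
     else if (int j - int i) mod int n = 1 \<or> (int i - int j) mod int n = 1 then a
     else 0)"

text \<open>Linear independence of a finite family of complex vectors of dimension d
  (library notion from the vector-space connection of Jordan_Normal_Form,
  plus distinctness so that it is independence of the family, not just its set).\<close>
definition lin_indpt_family :: "nat \<Rightarrow> complex vec list \<Rightarrow> bool" where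
  "lin_indpt_family d ws \<longleftrightarrow> distinct ws \<and> set ws \<subseteq> carrier_vec d \<and>
     \<not> module.lin_dep class_ring (module_vec TYPE(complex) d) (set ws)"

end

theory Submission
  imports Defs
begin


lemma mod_one_iff:
  fixes x :: int and n :: nat
  assumes "n > 2" "- int n < x" "x < int n"
  shows "x mod int n = 1 \<longleftrightarrow> x = 1 \<or> x = 1 - int n"
proof (cases "x \<ge> 0")
  case True
  then have "x mod int n = x" using assms by (simp add: mod_pos_pos_trivial)
  moreover have "x \<noteq> 1 - int n" using True assms by linarith
  ultimately show ?thesis by simp
next
  case False
  have "x mod int n = (x + int n) mod int n" by simp
  also have "\<dots> = x + int n" using assms False by (intro mod_pos_pos_trivial) linarith+
  finally have "x mod int n = x + int n" .
  moreover have "x \<noteq> 1" using False by linarith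
  ultimately show ?thesis by linarith
qed

lemma entry:
  assumes "n > 2" "i < n" "j < n"
  shows "m_mat n a b c $$ (Suc i, Suc j) =
    (if j = i then c else if j = (i+1) mod n \<or> j = (i+n-1) mod n then a else 0)"
proof -
  have e: "m_mat n a b c $$ (Suc i, Suc j) = (if Suc i = Suc j then c
     else if (int (Suc j) - int (Suc i)) mod int n = 1 \<or> (int (Suc i) - int (Suc j)) mod int n = 1 then a
     else 0)" using assms unfolding m_mat_def by simp
  have 1: "(int (Suc j) - int (Suc i)) mod int n = 1 \<longleftrightarrow> j = (i+1) mod n"
  proof -
    have "(int (Suc j) - int (Suc i)) mod int n = 1 \<longleftrightarrow> int j - int i = 1 \<or> int j - int i = 1 - int n"
      using mod_one_iff[of n "int j - int i"] assms by auto
    also have "\<dots> \<longleftrightarrow> j = (i+1) mod n"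
      using assms by (cases "i + 1 = n") auto
    finally show ?thesis .
  qed
  have 2: "(int (Suc i) - int (Suc j)) mod int n = 1 \<longleftrightarrow> j = (i+n-1) mod n"
  proof -
    have "(int (Suc i) - int (Suc j)) mod int n = 1 \<longleftrightarrow> int i - int j = 1 \<or> int i - int j = 1 - int n"
      using mod_one_iff[of n "int i - int j"] assms by auto
    also have "\<dots> \<longleftrightarrow> j = (i+n-1) mod n"
    proof (cases "i = 0")
      case True
      then show ?thesis using assms by auto
    next
      case False
      then have "(i+n-1) mod n = i - 1" using assms
        by (metis Nat.add_diff_assoc2 One_nat_def Suc_leI add.commute le_add_diff_inverse less_imp_diff_less mod_add_self2 mod_less neq0_conv)
      then show ?thesis using assms False by auto
    qed
    finally show ?thesis .
  qed
  show ?thesis unfolding e 1 2 by simp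
qed

lemma nbr_vals:
  fixes n i :: nat
  assumes "n > 2" "i < n"
  shows "(i+1) mod n = (if i = n - 1 then 0 else i + 1)"
        "(i+n-1) mod n = (if i = 0 then n - 1 else i - 1)"
proof -
  show "(i+1) mod n = (if i = n - 1 then 0 else i + 1)"
  proof (cases "i = n - 1")
    case True
    then have "i + 1 = n" using assms by simp
    then show ?thesis using True by simp
  next
    case False
    then have "i + 1 < n" using assms by simp
    then show ?thesis using False by simp
  qed
  show "(i+n-1) mod n = (if i = 0 then n - 1 else i - 1)"
  proof (cases "i = 0")
    case True
    then show ?thesis using assms by simp
  next
    case False
    then have "i + n - 1 = (i - 1) + n" using assms by simp
    then have "(i+n-1) mod n = (i - 1) mod n" by simp
    also have "\<dots> = i - 1" using assms by simp
    finally show ?thesis using False by simp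
  qed
qed

lemma nbr_distinct:
  fixes n i :: nat
  assumes "n > 2" "i < n"
  shows "(i+1) mod n \<noteq> i" "(i+n-1) mod n \<noteq> i" "(i+1) mod n \<noteq> (i+n-1) mod n"
    "(i+1) mod n < n" "(i+n-1) mod n < n"
  unfolding nbr_vals[OF assms] using assms by auto

lemma row_succ:
  fixes v :: "complex vec"
  assumes "n > 2" "i < n" "v \<in> carrier_vec (n+1)"
  shows "(map_mat complex_of_real (m_mat n a b c) *\<^sub>v v) $ Suc i =
    b * v $ 0 + c * v $ Suc i + a * v $ Suc ((i+1) mod n) + a * v $ Suc ((i+n-1) mod n)"
proof -
  let ?M = "map_mat complex_of_real (m_mat n a b c)"
  let ?p = "(i+n-1) mod n" and ?s = "(i+1) mod n"
  have dims: "dim_row ?M = n+1" "dim_col ?M = n+1" "dim_vec v = n+1"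
    using assms unfolding m_mat_def by auto
  have "(?M *\<^sub>v v) $ Suc i = (\<Sum>j<Suc n. ?M $$ (Suc i, j) * v $ j)"
    using assms dims by (simp add: scalar_prod_def atLeast0LessThan)
  also have "\<dots> = ?M $$ (Suc i, 0) * v $ 0 + (\<Sum>j<n. ?M $$ (Suc i, Suc j) * v $ Suc j)"
    by (rule sum.lessThan_Suc_shift)
  also have "?M $$ (Suc i, 0) = b" using assms unfolding m_mat_def by simp
  also have "(\<Sum>j<n. ?M $$ (Suc i, Suc j) * v $ Suc j) =
     (\<Sum>j<n. (if j = i then c * v $ Suc j else 0) + (if j = ?s then a * v $ Suc j else 0)
        + (if j = ?p then a * v $ Suc j else 0))"
  proof (rule sum.cong[OF refl])
    fix j assume j: "j \<in> {..<n}"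
    have "?M $$ (Suc i, Suc j) = complex_of_real (m_mat n a b c $$ (Suc i, Suc j))"
      using assms j unfolding m_mat_def by simp
    also have "\<dots> = complex_of_real (if j = i then c else if j = ?s \<or> j = ?p then a else 0)"
      using entry[OF assms(1,2)] j by simp
    finally show "?M $$ (Suc i, Suc j) * v $ Suc j = (if j = i then c * v $ Suc j else 0) + (if j = ?s then a * v $ Suc j else 0)
        + (if j = ?p then a * v $ Suc j else 0)"
      using nbr_distinct[OF assms(1,2)] by auto
  qed
  also have "\<dots> = c * v $ Suc i + a * v $ Suc ?s + a * v $ Suc ?p"
    using assms nbr_distinct[OF assms(1,2)] by (simp add: sum.distrib)
  finally show ?thesis by simp
qed

lemma row_zero:
  fixes v :: "complex vec"
  assumes "n > 2" "v \<in> carrier_vec (n+1)"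
  shows "(map_mat complex_of_real (m_mat n a b c) *\<^sub>v v) $ 0 =
    - (real n * c) * v $ 0 + b * (\<Sum>j<n. v $ Suc j)"
proof -
  let ?M = "map_mat complex_of_real (m_mat n a b c)"
  have dims: "dim_row ?M = n+1" "dim_col ?M = n+1" "dim_vec v = n+1"
    using assms unfolding m_mat_def by auto
  have "(?M *\<^sub>v v) $ 0 = (\<Sum>j<Suc n. ?M $$ (0, j) * v $ j)"
    using assms dims by (simp add: scalar_prod_def atLeast0LessThan)
  also have "\<dots> = ?M $$ (0, 0) * v $ 0 + (\<Sum>j<n. ?M $$ (0, Suc j) * v $ Suc j)"
    by (rule sum.lessThan_Suc_shift)
  also have "(\<Sum>j<n. ?M $$ (0, Suc j) * v $ Suc j) = (\<Sum>j<n. b * v $ Suc j)"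
    by (rule sum.cong[OF refl]) (simp add: m_mat_def)
  also have "?M $$ (0, 0) = - (real n * c)" by (simp add: m_mat_def)
  finally show ?thesis by (simp add: sum_distrib_left)
qed




lemma om_n: assumes "n > 0" shows "cis (2*pi/real n) ^ n = 1"
proof -
  have "real n * (2*pi/real n) = 2*pi" using assms by simp
  then show ?thesis unfolding DeMoivre by simp
qed
lemma om_mod: assumes "n > 0" shows "cis (2*pi/real n) ^ m = cis (2*pi/real n) ^ (m mod n)"
proof -
  have "m = n * (m div n) + m mod n" by simp
  then have "cis (2*pi/real n) ^ m = (cis (2*pi/real n) ^ n) ^ (m div n) * cis (2*pi/real n) ^ (m mod n)"
    by (metis power_add power_mult)
  then show ?thesis using om_n[OF assms] by simp
qed

lemma om_eq1: assumes "n > 0" "cis (2*pi/real n) ^ m = 1" shows "n dvd m"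
proof -
  have "cos (real m * (2*pi/real n)) = 1"
    using assms(2) unfolding DeMoivre by (metis cis.sel(1) one_complex.sel(1))
  then obtain k :: int where k: "real m * (2*pi/real n) = of_int k * 2 * pi"
    using cos_one_2pi_int by blast
  then have "real m = of_int k * real n" using assms(1) by (simp add: field_simps)
  then have "int m = k * int n" by (metis of_int_eq_iff of_int_mult of_int_of_nat_eq)
  then have "int n dvd int m" by simp
  then show ?thesis by simp
qed

lemma om_sum: assumes "n > 0"
  shows "(\<Sum>j<n. cis (2*pi/real n) ^ (j*m)) = (if n dvd m then of_nat n else 0)"
proof (cases "n dvd m")
  case True
  then obtain q where "m = n * q" by blast
  then have "\<And>j. cis (2*pi/real n) ^ (j*m) = 1"
    using om_n[OF assms] by (metis mult.left_commute power_mult power_one)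
  then show ?thesis using True by simp
next
  case False
  let ?z = "cis (2*pi/real n) ^ m"
  have z1: "?z \<noteq> 1" using om_eq1[OF assms] False by blast
  have zn: "?z ^ n = 1" using om_n[OF assms] by (metis mult.commute power_mult power_one)
  have "(\<Sum>j<n. cis (2*pi/real n) ^ (j*m)) = (\<Sum>j<n. ?z ^ j)"
    by (rule sum.cong[OF refl]) (metis mult.commute power_mult)
  also have "\<dots> = 0" using geometric_sum[OF z1, of n] zn by simp
  finally show ?thesis using False by simp
qed

lemma om_conj: assumes "n > 0"
  shows "cis (2*pi/real n) ^ k + cis (2*pi/real n) ^ ((n-1)*k) = 2 * cos (real k * (2*pi/real n))"
proof -
  let ?x = "real k * (2*pi/real n)"
  have e: "real ((n-1)*k) * (2*pi/real n) = 2*pi*real k + (- ?x)"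
    using assms by (simp add: of_nat_diff field_simps)
  have "cis (2*pi/real n) ^ ((n-1)*k) = cis (2*pi*real k + (- ?x))"
    unfolding DeMoivre e by (rule refl)
  also have "\<dots> = cis (2*pi*real k) * cis (- ?x)" by (rule cis_mult[symmetric])
  also have "cis (2*pi*real k) = 1" by simp
  finally have "cis (2*pi/real n) ^ ((n-1)*k) = cis (- ?x)" by simp
  then show ?thesis by (simp add: DeMoivre complex_eq_iff)
qed
lemma dvd_shift:
  fixes n k l :: nat
  assumes "1 \<le> k" "k < n" "1 \<le> l" "l < n"
  shows "n dvd (k + n - l) \<longleftrightarrow> k = l"
proof
  assume "n dvd (k + n - l)"
  then obtain q where q: "k + n - l = n * q" by blast
  have pos: "0 < k + n - l" and lt: "k + n - l < 2 * n" using assms by linarith+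
  have "q \<noteq> 0" using pos q by (metis mult_0_right less_irrefl)
  moreover have "\<not> q \<ge> 2"
  proof
    assume "q \<ge> 2"
    then have "n * 2 \<le> n * q" by (rule mult_left_mono) simp
    then show False using lt q by linarith
  qed
  ultimately have "q = 1" by linarith
  then have "k + n - l = n" using q by simp
  then show "k = l" using assms by linarith
qed simp

lemma coeff_zero:
  fixes cm cp :: complex and f :: "nat \<Rightarrow> complex" and n :: nat and bm bp :: complex
  assumes n: "n > 2" and bne: "bm \<noteq> bp"
    and E0: "cm * bm + cp * bp = 0"
    and Ej: "\<And>j. j < n \<Longrightarrow> cm + cp + (\<Sum>k\<in>{1..<n}. f k * cis (2*pi/real n) ^ (j*k)) = 0"
  shows "cm = 0 \<and> cp = 0 \<and> (\<forall>k\<in>{1..<n}. f k = 0)"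
proof -
  let ?w = "cis (2*pi/real n)"
  have n0: "n > 0" using n by simp
  have "0 = (\<Sum>j<n. cm + cp + (\<Sum>k\<in>{1..<n}. f k * ?w ^ (j*k)))" using Ej by simp
  also have "\<dots> = of_nat n * (cm + cp) + (\<Sum>k\<in>{1..<n}. f k * (\<Sum>j<n. ?w ^ (j*k)))"
  proof -
    have "(\<Sum>j<n. cm + cp + (\<Sum>k\<in>{1..<n}. f k * ?w ^ (j*k))) = (\<Sum>j<n. cm + cp) + (\<Sum>j<n. (\<Sum>k\<in>{1..<n}. f k * ?w ^ (j*k)))"
      by (rule sum.distrib)
    also have "(\<Sum>j<n. (\<Sum>k\<in>{1..<n}. f k * ?w ^ (j*k))) = (\<Sum>k\<in>{1..<n}. (\<Sum>j<n. f k * ?w ^ (j*k)))"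
      by (rule sum.swap)
    finally show ?thesis by (simp add: sum_distrib_left)
  qed
  also have "(\<Sum>k\<in>{1..<n}. f k * (\<Sum>j<n. ?w ^ (j*k))) = 0"
    by (rule sum.neutral) (auto simp: om_sum[OF n0] dest: dvd_imp_le)
  finally have "cm + cp = 0" using n0 by simp
  then have cm: "cm = - cp" by (simp add: eq_neg_iff_add_eq_0)
  then have "cp * (bp - bm) = 0" using E0 by (simp add: algebra_simps)
  then have cp: "cp = 0" using bne by simp
  have "f l = 0" if l: "l \<in> {1..<n}" for l
  proof -
    have "0 = (\<Sum>j<n. ?w ^ (j*(n-l)) * (cm + cp + (\<Sum>k\<in>{1..<n}. f k * ?w ^ (j*k))))" using Ej by simp
    also have "\<dots> = (\<Sum>j<n. (\<Sum>k\<in>{1..<n}. f k * ?w ^ (j*(k+n-l))))"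
    proof (rule sum.cong[OF refl])
      fix j
      have "\<And>k. k \<in> {1..<n} \<Longrightarrow> ?w ^ (j*(n-l)) * (f k * ?w ^ (j*k)) = f k * ?w ^ (j*(k+n-l))"
      proof -
        fix k assume "k \<in> {1..<n}"
        then have "j*(k+n-l) = j*(n-l) + j*k" using l by (simp add: algebra_simps)
        then show "?w ^ (j*(n-l)) * (f k * ?w ^ (j*k)) = f k * ?w ^ (j*(k+n-l))"
          by (simp add: power_add)
      qed
      then have "(\<Sum>k\<in>{1..<n}. ?w ^ (j*(n-l)) * (f k * ?w ^ (j*k))) = (\<Sum>k\<in>{1..<n}. f k * ?w ^ (j*(k+n-l)))"
        by (rule sum.cong[OF refl])
      then show "?w ^ (j*(n-l)) * (cm + cp + (\<Sum>k\<in>{1..<n}. f k * ?w ^ (j*k))) = (\<Sum>k\<in>{1..<n}. f k * ?w ^ (j*(k+n-l)))"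
      proof -
        have "?w ^ (j*(n-l)) * (cm + cp + (\<Sum>k\<in>{1..<n}. f k * ?w ^ (j*k))) = ?w ^ (j*(n-l)) * (\<Sum>k\<in>{1..<n}. f k * ?w ^ (j*k))"
          using cm cp by simp
        also have "\<dots> = (\<Sum>k\<in>{1..<n}. ?w ^ (j*(n-l)) * (f k * ?w ^ (j*k)))"
          by (rule sum_distrib_left)
        finally show ?thesis using \<open>(\<Sum>k\<in>{1..<n}. ?w ^ (j*(n-l)) * (f k * ?w ^ (j*k))) = _\<close> by simp
      qed
    qed
    also have "\<dots> = (\<Sum>k\<in>{1..<n}. f k * (\<Sum>j<n. ?w ^ (j*(k+n-l))))"
      by (subst sum.swap) (simp add: sum_distrib_left)
    also have "\<dots> = (\<Sum>k\<in>{1..<n}. if k = l then f k * of_nat n else 0)"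
      by (rule sum.cong[OF refl]) (use l in \<open>auto simp: om_sum[OF n0] dvd_shift\<close>)
    also have "\<dots> = f l * of_nat n" using l by simp
    finally show ?thesis using n0 by simp
  qed
  then show ?thesis using cm cp by simp
qed

lemma om_inj:
  fixes n k l :: nat
  assumes n: "n > 0" and k: "k < n" and l: "l < n" and eq: "cis (2*pi/real n) ^ k = cis (2*pi/real n) ^ l"
  shows "k = l"
proof -
  have *: False if kl: "k < l" "cis (2*pi/real n) ^ k = cis (2*pi/real n) ^ l" "l < n" for k l :: nat
  proof -
    have "cis (2*pi/real n) ^ l = cis (2*pi/real n) ^ k * cis (2*pi/real n) ^ (l - k)"
      using kl(1) by (metis le_add_diff_inverse less_imp_le power_add)
    then have "cis (2*pi/real n) ^ (l - k) = 1" using kl(2) by simp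
    then have "n dvd (l - k)" using om_eq1[OF n] by blast
    moreover have "0 < l - k" "l - k < n" using kl by linarith+
    ultimately show False using nat_dvd_not_less by blast
  qed
  show ?thesis
  proof (cases k l rule: linorder_cases)
    case less then show ?thesis using *[of k l] eq l by blast
  next
    case greater then show ?thesis using *[of l k] eq k by simp
  qed simp
qed

lemma eig_beta:
  fixes n :: nat and a b c \<beta> :: real
  assumes n: "n > 2" and q: "b*\<beta>^2 + (2*a + (real n+1)*c)*\<beta> - real n * b = 0"
  shows "map_mat complex_of_real (m_mat n a b c) *\<^sub>v vec (n+1) (\<lambda>i. if i=0 then complex_of_real \<beta> else 1)
     = complex_of_real (b*\<beta>+2*a+c) \<cdot>\<^sub>v vec (n+1) (\<lambda>i. if i=0 then complex_of_real \<beta> else 1)"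
    (is "?M *\<^sub>v ?v = ?l \<cdot>\<^sub>v ?v")
proof (rule eq_vecI)
  have dims: "dim_row ?M = n+1" unfolding m_mat_def by simp
  show "dim_vec (?M *\<^sub>v ?v) = dim_vec (?l \<cdot>\<^sub>v ?v)" using dims by simp
  fix i assume "i < dim_vec (?l \<cdot>\<^sub>v ?v)"
  then have i: "i < n + 1" by simp
  have cv: "?v \<in> carrier_vec (n+1)" by simp
  show "(?M *\<^sub>v ?v) $ i = (?l \<cdot>\<^sub>v ?v) $ i"
  proof (cases i)
    case 0
    have r: "- (real n * c) * \<beta> + b * real n = (b*\<beta>+2*a+c) * \<beta>"
      using q by (simp add: algebra_simps power2_eq_square)
    have "(?M *\<^sub>v ?v) $ 0 = complex_of_real (- (real n * c) * \<beta> + b * real n)"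
      using row_zero[OF n cv, of a b c] by simp
    also have "\<dots> = complex_of_real ((b*\<beta>+2*a+c) * \<beta>)" using r by simp
    finally show ?thesis using 0 by simp
  next
    case (Suc i')
    then have i': "i' < n" using i by simp
    have vv: "?v $ Suc i' = 1" "?v $ Suc ((i'+1) mod n) = 1" "?v $ Suc ((i'+n-1) mod n) = 1" "?v $ 0 = complex_of_real \<beta>"
      using i' nbr_distinct[OF n i'] by simp_all
    have "(?M *\<^sub>v ?v) $ Suc i' = complex_of_real (b * \<beta> + c + a + a)"
      using row_succ[OF n i' cv, of a b c] unfolding vv by simp
    then show ?thesis using Suc i' by simp
  qed
qed

lemma eig_k:
  fixes n k :: nat and a b c :: real
  assumes n: "n > 2" and k: "1 \<le> k" "k < n"
  shows "map_mat complex_of_real (m_mat n a b c) *\<^sub>v vec (n+1) (\<lambda>i. if i=0 then 0 else cis (2*pi/real n) ^ ((i-1)*k))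
     = complex_of_real (c + 2*a*cos (real k * (2*pi/real n))) \<cdot>\<^sub>v vec (n+1) (\<lambda>i. if i=0 then 0 else cis (2*pi/real n) ^ ((i-1)*k))"
    (is "?M *\<^sub>v ?v = ?l \<cdot>\<^sub>v ?v")
proof (rule eq_vecI)
  let ?w = "cis (2*pi/real n)"
  have n0: "n > 0" using n by simp
  have dims: "dim_row ?M = n+1" unfolding m_mat_def by simp
  show "dim_vec (?M *\<^sub>v ?v) = dim_vec (?l \<cdot>\<^sub>v ?v)" using dims by simp
  fix i assume "i < dim_vec (?l \<cdot>\<^sub>v ?v)"
  then have i: "i < n + 1" by simp
  have cv: "?v \<in> carrier_vec (n+1)" by simp
  show "(?M *\<^sub>v ?v) $ i = (?l \<cdot>\<^sub>v ?v) $ i"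
  proof (cases i)
    case 0
    have nd: "\<not> n dvd k" using k by (auto dest: dvd_imp_le)
    have "(\<Sum>j<n. ?v $ Suc j) = (\<Sum>j<n. ?w ^ (j*k))" by (rule sum.cong) auto
    also have "\<dots> = 0" using om_sum[OF n0, of k] nd by simp
    finally have "(?M *\<^sub>v ?v) $ 0 = 0"
      using row_zero[OF n cv, of a b c] by simp
    then show ?thesis using 0 by simp
  next
    case (Suc i')
    then have i': "i' < n" using i by simp
    let ?s = "(i'+1) mod n" and ?p = "(i'+n-1) mod n"
    have s: "?w ^ (?s * k) = ?w ^ (i'*k) * ?w ^ k"
    proof -
      have "?w ^ (?s * k) = ?w ^ ((?s * k) mod n)" by (rule om_mod[OF n0])
      also have "(?s * k) mod n = ((i'+1)*k) mod n" by (rule mod_mult_left_eq)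
      also have "?w ^ (((i'+1)*k) mod n) = ?w ^ ((i'+1)*k)" by (rule om_mod[OF n0, symmetric])
      also have "(i'+1)*k = i'*k + k" by simp
      finally show ?thesis by (simp add: power_add)
    qed
    have p: "?w ^ (?p * k) = ?w ^ (i'*k) * ?w ^ ((n-1)*k)"
    proof -
      have "?w ^ (?p * k) = ?w ^ ((?p * k) mod n)" by (rule om_mod[OF n0])
      also have "(?p * k) mod n = ((i'+n-1)*k) mod n" by (rule mod_mult_left_eq)
      also have "?w ^ (((i'+n-1)*k) mod n) = ?w ^ ((i'+n-1)*k)" by (rule om_mod[OF n0, symmetric])
      also have "(i'+n-1)*k = i'*k + (n-1)*k" using n by (simp add: algebra_simps)
      finally show ?thesis by (simp add: power_add)
    qed
    have vv: "?v $ Suc i' = ?w ^ (i'*k)" "?v $ Suc ?s = ?w ^ (?s*k)" "?v $ Suc ?p = ?w ^ (?p*k)" "?v $ 0 = 0"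
      using i' nbr_distinct[OF n i'] by simp_all
    have "(?M *\<^sub>v ?v) $ Suc i' = c * ?w ^ (i'*k) + a * ?w ^ (?s*k) + a * ?w ^ (?p*k)"
      using row_succ[OF n i' cv, of a b c] unfolding vv by simp
    also have "\<dots> = ?w ^ (i'*k) * (c + a * (?w ^ k + ?w ^ ((n-1)*k)))"
      unfolding s p by (simp add: algebra_simps)
    also have "?w ^ k + ?w ^ ((n-1)*k) = 2 * cos (real k * (2*pi/real n))" by (rule om_conj[OF n0])
    finally show ?thesis using Suc i' by (simp add: mult.commute)
  qed
qed

lemma indep:
  fixes n :: nat and bp bm :: real and wp wm :: "complex vec" and w :: "nat \<Rightarrow> complex vec"
  assumes n: "n > 2" and ne: "bp \<noteq> bm" "bp \<noteq> 0" "bm \<noteq> 0"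
    and wp_def: "wp = vec (n+1) (\<lambda>i. if i = 0 then complex_of_real bp else 1)"
    and wm_def: "wm = vec (n+1) (\<lambda>i. if i = 0 then complex_of_real bm else 1)"
    and w_def: "\<And>k. w k = vec (n+1) (\<lambda>i. if i = 0 then 0 else cis (2*pi/real n) ^ ((i - 1) * k))"
  shows "lin_indpt_family (n+1) ([wm, wp] @ map w [1..<n])"
proof -
  interpret V: vec_space "TYPE(complex)" "n+1" .
  let ?w = "cis (2*pi/real n)"
  have n0: "n > 0" using n by simp
  have inj: "inj_on w {1..<n}"
  proof (rule inj_onI)
    fix k l assume k: "k \<in> {1..<n}" and l: "l \<in> {1..<n}" and eq: "w k = w l"
    have "w k $ 2 = w l $ 2" using eq by simp
    then have "?w ^ k = ?w ^ l" using n by (simp add: w_def)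
    then show "k = l" using om_inj[OF n0] k l by auto
  qed
  have w0: "\<And>k. w k $ 0 = 0" by (simp add: w_def)
  have wm_notin: "wm \<notin> w ` {1..<n}"
  proof
    assume "wm \<in> w ` {1..<n}"
    then obtain k where "wm = w k" by blast
    then have "wm $ 0 = w k $ 0" by simp
    then show False using ne(3) w0 by (simp add: wm_def)
  qed
  have wp_notin: "wp \<notin> w ` {1..<n}"
  proof
    assume "wp \<in> w ` {1..<n}"
    then obtain k where "wp = w k" by blast
    then have "wp $ 0 = w k $ 0" by simp
    then show False using ne(2) w0 by (simp add: wp_def)
  qed
  have mp: "wm \<noteq> wp"
  proof
    assume "wm = wp"
    then have "wm $ 0 = wp $ 0" by simp
    then show False using ne(1) by (simp add: wm_def wp_def)
  qed
  have dist: "distinct ([wm, wp] @ map w [1..<n])"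
    using inj wm_notin wp_notin mp by (simp add: distinct_map)
  have carr: "set ([wm, wp] @ map w [1..<n]) \<subseteq> carrier_vec (n+1)"
    by (auto simp: wm_def wp_def w_def)
  let ?S = "set ([wm, wp] @ map w [1..<n])"
  have S: "?S = insert wm (insert wp (w ` {1..<n}))" by simp
  have sumS: "(\<Sum>x\<in>?S. g x) = g wm + g wp + (\<Sum>k\<in>{1..<n}. g (w k))" for g :: "complex vec \<Rightarrow> complex"
    unfolding S using wm_notin wp_notin mp inj by (simp add: sum.reindex add.assoc)
  have "\<not> V.lin_dep ?S"
  proof
    assume "V.lin_dep ?S"
    then obtain A u v where A: "finite A" "A \<subseteq> ?S" and lc: "V.lincomb u A = 0\<^sub>v (n+1)"
      and v: "v \<in> A" "u v \<noteq> 0"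
      unfolding V.lin_dep_def by blast
    define u' where "u' x = (if x \<in> A then u x else 0)" for x
    have key: "(\<Sum>x\<in>?S. u' x * x $ i) = 0" if i: "i < n + 1" for i
    proof -
      have "(\<Sum>x\<in>?S. u' x * x $ i) = (\<Sum>x\<in>A. u x * x $ i)"
        using A by (intro sum.mono_neutral_cong_right) (auto simp: u'_def)
      also have "\<dots> = V.lincomb u A $ i"
      proof -
        have "A \<subseteq> carrier_vec (n+1)" using A(2) carr by blast
        from V.lincomb_index[OF i this] show ?thesis by simp
      qed
      also have "\<dots> = 0" using lc i by simp
      finally show ?thesis .
    qed
    have E0: "u' wm * complex_of_real bm + u' wp * complex_of_real bp = 0"
      using key[of 0] unfolding sumS by (simp add: wm_def wp_def w0)
    have Ej: "u' wm + u' wp + (\<Sum>k\<in>{1..<n}. u' (w k) * ?w ^ (j*k)) = 0" if j: "j < n" for j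
      using key[of "Suc j"] j unfolding sumS by (simp add: wm_def wp_def w_def)
    have bne: "complex_of_real bm \<noteq> complex_of_real bp" using ne(1) by simp
    from coeff_zero[OF n bne E0 Ej]
    have z: "u' wm = 0" "u' wp = 0" "\<And>k. k \<in> {1..<n} \<Longrightarrow> u' (w k) = 0" by auto
    have "u' v = 0" using A(2) v(1) z by auto
    then show False using v by (simp add: u'_def)
  qed
  then show ?thesis unfolding lin_indpt_family_def using dist carr by simp
qed

theorem theorem4:
  fixes n :: nat and a b c :: real
    and M :: "complex mat" and \<phi> \<Delta> \<beta>p \<beta>m lamp lamm :: real and \<omega> :: complex
    and lam :: "nat \<Rightarrow> real" and wp wm :: "complex vec" and w :: "nat \<Rightarrow> complex vec"
  assumes hn: "n > 2" and hb: "b \<noteq> 0"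
      and M_def: "M = map_mat complex_of_real (m_mat n a b c)"
      and phi_def: "\<phi> = 2 * pi / real n"
      and omega_def: "\<omega> = exp (\<i> * complex_of_real \<phi>)"
      and Delta_def: "\<Delta> = (2*a + (real n + 1) * c)^2 + 4 * real n * b^2"
      and betap_def: "\<beta>p = - (2*a + (real n + 1) * c - sqrt \<Delta>) / (2*b)"
      and betam_def: "\<beta>m = - (2*a + (real n + 1) * c + sqrt \<Delta>) / (2*b)"
      and lamp_def: "lamp = b * \<beta>p + 2*a + c"
      and lamm_def: "lamm = b * \<beta>m + 2*a + c"
      and lam_def: "\<And>k. lam k = c + 2 * a * cos (real k * \<phi>)"
      and wp_def: "wp = vec (n+1) (\<lambda>i. if i = 0 then complex_of_real \<beta>p else 1)"
      and wm_def: "wm = vec (n+1) (\<lambda>i. if i = 0 then complex_of_real \<beta>m else 1)"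
      and w_def: "\<And>k. w k = vec (n+1) (\<lambda>i. if i = 0 then 0 else \<omega> ^ ((i - 1) * k))"
  shows "lamp = (2*a - (real n - 1) * c + sqrt \<Delta>) / 2
    \<and> lamm = (2*a - (real n - 1) * c - sqrt \<Delta>) / 2
    \<and> M *\<^sub>v wp = complex_of_real lamp \<cdot>\<^sub>v wp
    \<and> M *\<^sub>v wm = complex_of_real lamm \<cdot>\<^sub>v wm
    \<and> (\<forall>k\<in>{1..n-1}. M *\<^sub>v w k = complex_of_real (lam k) \<cdot>\<^sub>v w k)
    \<and> lin_indpt_family (n+1) ([wm, wp] @ map w [1..<n])"
proof -
  let ?S = "2*a + (real n + 1) * c"
  have om: "\<omega> = cis (2*pi/real n)" unfolding omega_def phi_def cis_conv_exp by simp
  have Dpos: "\<Delta> > 0"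
  proof -
    have "4 * real n * b^2 > 0" using hn hb by simp
    then show ?thesis unfolding Delta_def by (smt (verit) zero_le_power2)
  qed
  have sq: "sqrt \<Delta> ^ 2 = \<Delta>" using Dpos by simp
  have sqpos: "sqrt \<Delta> > 0" using Dpos by simp
  have l1: "lamp = (2*a - (real n - 1) * c + sqrt \<Delta>) / 2"
    unfolding lamp_def betap_def using hb by (simp add: field_simps)
  have l2: "lamm = (2*a - (real n - 1) * c - sqrt \<Delta>) / 2"
    unfolding lamm_def betam_def using hb by (simp add: field_simps)
  have qp: "b*\<beta>p^2 + ?S*\<beta>p - real n * b = 0"
  proof -
    have "4*b*(b*\<beta>p^2 + ?S*\<beta>p - real n * b) = (2*b*\<beta>p)^2 + 2*?S*(2*b*\<beta>p) - 4*real n*b^2"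
      by (simp add: algebra_simps power2_eq_square)
    also have "2*b*\<beta>p = sqrt \<Delta> - ?S" unfolding betap_def using hb by (simp add: field_simps)
    also have "(sqrt \<Delta> - ?S)^2 + 2*?S*(sqrt \<Delta> - ?S) - 4*real n*b^2 = sqrt \<Delta> ^ 2 - ?S^2 - 4*real n*b^2"
      by (simp add: algebra_simps power2_eq_square)
    also have "\<dots> = 0" unfolding sq Delta_def by simp
    finally show ?thesis using hb by simp
  qed
  have qm: "b*\<beta>m^2 + ?S*\<beta>m - real n * b = 0"
  proof -
    have "4*b*(b*\<beta>m^2 + ?S*\<beta>m - real n * b) = (2*b*\<beta>m)^2 + 2*?S*(2*b*\<beta>m) - 4*real n*b^2"
      by (simp add: algebra_simps power2_eq_square)
    also have "2*b*\<beta>m = - sqrt \<Delta> - ?S" unfolding betam_def using hb by (simp add: field_simps)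
    also have "(- sqrt \<Delta> - ?S)^2 + 2*?S*(- sqrt \<Delta> - ?S) - 4*real n*b^2 = sqrt \<Delta> ^ 2 - ?S^2 - 4*real n*b^2"
      by (simp add: algebra_simps power2_eq_square)
    also have "\<dots> = 0" unfolding sq Delta_def by simp
    finally show ?thesis using hb by simp
  qed
  have e1: "M *\<^sub>v wp = complex_of_real lamp \<cdot>\<^sub>v wp"
    unfolding M_def wp_def lamp_def using eig_beta[OF hn qp] .
  have e2: "M *\<^sub>v wm = complex_of_real lamm \<cdot>\<^sub>v wm"
    unfolding M_def wm_def lamm_def using eig_beta[OF hn qm] .
  have e3: "\<forall>k\<in>{1..n-1}. M *\<^sub>v w k = complex_of_real (lam k) \<cdot>\<^sub>v w k"
  proof
    fix k assume k: "k \<in> {1..n-1}"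
    then have k1: "1 \<le> k" "k < n" using hn by auto
    show "M *\<^sub>v w k = complex_of_real (lam k) \<cdot>\<^sub>v w k"
      unfolding M_def w_def lam_def om phi_def using eig_k[OF hn k1] .
  qed
  have ne: "\<beta>p \<noteq> \<beta>m"
  proof
    assume "\<beta>p = \<beta>m"
    then have "2*b*\<beta>p = 2*b*\<beta>m" by simp
    then have "sqrt \<Delta> - ?S = - sqrt \<Delta> - ?S" unfolding betap_def betam_def using hb by (simp add: field_simps)
    then show False using sqpos by simp
  qed
  have nz: "\<beta>p \<noteq> 0" "\<beta>m \<noteq> 0" using qp qm hb hn by auto
  have e4: "lin_indpt_family (n+1) ([wm, wp] @ map w [1..<n])"
    by (rule indep[OF hn ne nz wp_def wm_def]) (use w_def in \<open>unfold om\<close>)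
  show ?thesis using l1 l2 e1 e2 e3 e4 by blast
qed

end
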